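(* In the MLR-DMPC setting described in the context, fix a CU $w$, a UAV $i\in\mathcal A$ and a round $k$. If, after the update procedure of round $k$, the information tracker $\mathcal D_{iw}(k)$ is not marked deprecated, then $\mathcal D_{iw}(k)$ contains the true reference trajectory $\hat p_i$ that UAV $i$ is following.
   Context: Setting (MLR-DMPC). There are $N$ UAVs indexed by $\mathcal A=\{1,\dots,N\}$ and $M$ compute units (CUs) indexed by $w\in\{1,\dots,M\}$, $1<M<N$. Time is divided into rounds $k=0,1,2,\dots$ of length $T>0$; each round consists of a computation phase followed by a communication phase in which every device broadcasts at most one message; any message may be lost at any receiver (arbitrary message loss). Nominal model: each UAV $i$ has a nominal system $\dot{\hat x}_i=\hat f_i(\hat x_i,\hat u_i)$, $\hat x_i\in\hat{\mathcal X}$, $\hat u_i\in\hat{\mathcal U}$, with nominal position $\hat p_i=\hat g_{p,i}(\hat x_i)\in\mathbb R^3$. Reference trajectories: in round $k$ UAV $i$ follows a reference $\hat x_i(\tau|k),\hat u_i(\tau|k)$, $\tau\ge 0$, applied at time $t=kT+\tau$. If in the communication phase of round $k$ UAV $i$ receives a trajectory $\hat u_{i,w}(\cdot|k)$ computed by CU $w$, then $\hat u_i(\tau|k+1)=\hat u_{i,w}(\tau+T|k)$; otherwise $\hat u_i(\tau|k+1)=\hat u_i(\tau+T|k)$. Each UAV broadcasts a message containing the metadata (computing CU and round) of the trajectory it currently follows. Information trackers: each CU $w$ keeps, for each UAV $i$, a set $\mathcal D_{iw}(k)$ of candidate trajectories (with metadata) together with a flag up-to-date/deprecated; elements are written $\tilde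 x_i(\cdot|k-1)$, $\tilde p_i(\cdot|k-1)$. Initially all trackers are empty and deprecated. At the start of round $k$, CU $w$ updates using the messages received in round $k-1$: (1) start from $\mathcal D_{iw}(k-1)$; for every UAV $i$ whose message was received, replace its tracker by the single stored trajectory whose metadata matches and mark that tracker up-to-date; (2) if some tracker then has more than one element, mark all trackers deprecated; (3) if fewer than $M$ CU messages were received, mark all trackers deprecated; (4) for every received CU message containing a newly computed trajectory for a UAV $i$, add it to $\mathcal D_{iw}(k)$. If all trackers are up-to-date, the CU runs a DMPC step: all such CUs compute the same set $\mathcal A_{ET}(k)$ of $M$ UAVs (highest priorities after max-consensus), CU $w$ selects the UAV at position $(k+w)\bmod M$ of $\mathcal A_{ET}(k)$ and, if that UAV's tracker has exactly one element, computes and broadcasts a new trajectory for it. Otherwise the CU is in message-loss-recovery mode: it computes no trajectory and instead (in alternate rounds) requests a UAV with a deprecated tracker to rebroadcast its current reference trajectory with metadata. *)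

theory Defs
  imports Main
begin

(* MLR-DMPC protocol model.
   UAVs are indexed by 1..N, compute units (CUs) by 1..M, rounds by k :: nat. *)

(* Metadata of a trajectory: the initial reference, or computed by CU w in round k. *)
datatype meta = Init | Comp nat nat

(* The type 'tr stands for the trajectory data
   \<hat>u_{i,w}(. | k) (and hence \<hat>x, \<hat>p) as computed; the reference followed in a
   later round is its time shift, which is fully determined by data and metadata. *)
type_synonym 'tr traj_rec = "meta \<times> 'tr"

datatype 'tr cu_msg = NewTraj nat 'tr | Request nat | Idle

(* Tracker state of one CU: the sets D_{iw} and the up-to-date flags (True = up-to-date). *)
type_synonym 'tr tracker_state = "(nat \<Rightarrow> 'tr traj_rec set) \<times> (nat \<Rightarrow> bool)"

(* An execution of the protocol (arbitrary message losses, arbitrary unspecified choices). *)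
record 'tr exec =
  uav_rec :: "nat \<Rightarrow> nat \<Rightarrow> 'tr traj_rec"          (* k j: trajectory (with metadata) UAV j follows in round k *)
  cu_msg :: "nat \<Rightarrow> nat \<Rightarrow> 'tr cu_msg"            (* k w: message broadcast by CU w in round k *)
  rcv_uav_at_cu :: "nat \<Rightarrow> nat \<Rightarrow> nat \<Rightarrow> bool"    (* k j w: UAV j's round-k message received by CU w *)
  rcv_cu_at_cu :: "nat \<Rightarrow> nat \<Rightarrow> nat \<Rightarrow> bool"     (* k w' w: CU w''s round-k message received by CU w *)
  rcv_cu_at_uav :: "nat \<Rightarrow> nat \<Rightarrow> nat \<Rightarrow> bool"    (* k w j: CU w's round-k message received by UAV j *)
  aet :: "nat \<Rightarrow> nat list"                        (* k: the ordered set A_ET(k) *)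

(* UAV j rebroadcasts its full current reference trajectory with metadata in round k
   iff it received a rebroadcast request in round k-1. *)
definition rebroadcast :: "nat \<Rightarrow> 'tr exec \<Rightarrow> nat \<Rightarrow> nat \<Rightarrow> bool" where
  "rebroadcast M E k j =
     (\<exists>k'. k = Suc k' \<and> (\<exists>w\<in>{1..M}. cu_msg E k' w = Request j \<and> rcv_cu_at_uav E k' w j))"

definition tracker_update ::
  "nat \<Rightarrow> nat \<Rightarrow> 'tr exec \<Rightarrow> nat \<Rightarrow> nat \<Rightarrow> 'tr tracker_state \<Rightarrow> 'tr tracker_state" where
  "tracker_update N M E k w S = (let
     D = fst S; F = snd S;
     heard = (\<lambda>i. i \<in> {1..N} \<and> rcv_uav_at_cu E k i w);
     r = (\<lambda>i. uav_rec E k i);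
     matches = (\<lambda>i. {x \<in> D i. fst x = fst (r i)});
     \<comment> \<open>step (1)\<close>
     D1 = (\<lambda>i. if heard i then
                 (if rebroadcast M E k i then {r i}
                  else if matches i \<noteq> {} then matches i else D i)
               else D i);
     F1 = (\<lambda>i. if heard i then (rebroadcast M E k i \<or> matches i \<noteq> {}) else F i);
     \<comment> \<open>steps (2) and (3)\<close>
     multi = (\<exists>i\<in>{1..N}. \<exists>a\<in>D1 i. \<exists>b\<in>D1 i. a \<noteq> b);
     heardC = {w'\<in>{1..M}. w' = w \<or> rcv_cu_at_cu E k w' w};
     F2 = (if multi \<or> card heardC < M then (\<lambda>i. False) else F1);
     \<comment> \<open>step (4)\<close>
     D2 = (\<lambda>i. D1 i \<union> {(Comp w' k, u) | w' u. w' \<in> heardC \<and> cu_msg E k w' = NewTraj i u})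
   in (D2, F2))"

(* trackers N M E k w: the trackers of CU w after the update procedure of round k. *)
primrec trackers :: "nat \<Rightarrow> nat \<Rightarrow> 'tr exec \<Rightarrow> nat \<Rightarrow> nat \<Rightarrow> 'tr tracker_state" where
  "trackers N M E 0 w = ((\<lambda>i. {}), (\<lambda>i. False))"
| "trackers N M E (Suc k) w = tracker_update N M E k w (trackers N M E k w)"

definition valid_exec :: "nat \<Rightarrow> nat \<Rightarrow> 'tr exec \<Rightarrow> bool" where
  "valid_exec N M E =
    ((\<forall>k. distinct (aet E k) \<and> length (aet E k) = M \<and> set (aet E k) \<subseteq> {1..N}) \<and>
     (\<forall>j\<in>{1..N}. fst (uav_rec E 0 j) = Init) \<and>
     (\<forall>k. \<forall>j\<in>{1..N}.
        (let R = {(w, u). w \<in> {1..M} \<and> cu_msg E k w = NewTraj j u \<and> rcv_cu_at_uav E k w j} in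
          (R = {} \<longrightarrow> uav_rec E (Suc k) j = uav_rec E k j) \<and>
          (R \<noteq> {} \<longrightarrow> (\<exists>(w, u)\<in>R. uav_rec E (Suc k) j = (Comp w k, u))))) \<and>
     (\<forall>k. \<forall>w\<in>{1..M}.
        (let D = fst (trackers N M E k w); F = snd (trackers N M E k w) in
          if (\<forall>i\<in>{1..N}. F i) then
            (let i = aet E k ! ((k + w) mod M) in
              if (\<exists>x. D i = {x}) then (\<exists>u. cu_msg E k w = NewTraj i u)
              else cu_msg E k w = Idle)
          else (cu_msg E k w = Idle \<or>
                (even k \<and> (\<exists>i\<in>{1..N}. \<not> F i \<and> cu_msg E k w = Request i))))))"

end

theory Submission
  imports Defs
begin

definition consx :: "'tr exec \<Rightarrow> nat \<Rightarrow> 'tr traj_rec \<Rightarrow> bool" where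
  "consx E i x = (case fst x of Init \<Rightarrow> x = uav_rec E 0 i
                   | Comp w k' \<Rightarrow> cu_msg E k' w = NewTraj i (snd x))"

lemma uav_step:
  assumes "valid_exec N M E" "j \<in> {1..N}"
  shows "uav_rec E (Suc k) j = uav_rec E k j \<or>
    (\<exists>w u. w \<in> {1..M} \<and> cu_msg E k w = NewTraj j u \<and> rcv_cu_at_uav E k w j
       \<and> uav_rec E (Suc k) j = (Comp w k, u))"
proof -
  have "\<forall>k. \<forall>j\<in>{1..N}.
        (let R = {(w, u). w \<in> {1..M} \<and> cu_msg E k w = NewTraj j u \<and> rcv_cu_at_uav E k w j} in
          (R = {} \<longrightarrow> uav_rec E (Suc k) j = uav_rec E k j) \<and>
          (R \<noteq> {} \<longrightarrow> (\<exists>(w, u)\<in>R. uav_rec E (Suc k) j = (Comp w k, u))))"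
    using assms(1) unfolding valid_exec_def by blast
  then have "let R = {(w, u). w \<in> {1..M} \<and> cu_msg E k w = NewTraj j u \<and> rcv_cu_at_uav E k w j} in
          (R = {} \<longrightarrow> uav_rec E (Suc k) j = uav_rec E k j) \<and>
          (R \<noteq> {} \<longrightarrow> (\<exists>(w, u)\<in>R. uav_rec E (Suc k) j = (Comp w k, u)))"
    using assms(2) by blast
  then show ?thesis unfolding Let_def by (cases "{(w, u). w \<in> {1..M} \<and> cu_msg E k w = NewTraj j u \<and> rcv_cu_at_uav E k w j} = {}") auto
qed

lemma uav_cons:
  assumes "valid_exec N M E" "j \<in> {1..N}"
  shows "consx E j (uav_rec E k j)"
proof (induction k)
  case 0
  then show ?case unfolding consx_def using assms unfolding valid_exec_def by auto
next
  case (Suc k)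
  from uav_step[OF assms, of k] show ?case
  proof
    assume "uav_rec E (Suc k) j = uav_rec E k j"
    then show ?thesis using Suc by simp
  next
    assume "\<exists>w u. w \<in> {1..M} \<and> cu_msg E k w = NewTraj j u \<and> rcv_cu_at_uav E k w j
       \<and> uav_rec E (Suc k) j = (Comp w k, u)"
    then show ?thesis unfolding consx_def by auto
  qed
qed

lemma cons_unique:
  assumes "consx E i x" "consx E i y" "fst x = fst y"
  shows "x = y"
proof (cases "fst x")
  case Init
  then show ?thesis using assms unfolding consx_def by auto
next
  case (Comp w k)
  then show ?thesis using assms unfolding consx_def by (auto intro: prod_eqI)
qed

lemma D_cons:
  assumes "valid_exec N M E"
  shows "x \<in> fst (trackers N M E k w) i \<Longrightarrow> consx E i x"
proof (induction k arbitrary: x i)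
  case 0
  then show ?case by simp
next
  case (Suc k)
  obtain D F where S: "trackers N M E k w = (D, F)" by fastforce
  have IH: "\<And>x i. x \<in> D i \<Longrightarrow> consx E i x" using Suc.IH S by simp
  have rc: "\<And>i. i \<in> {1..N} \<Longrightarrow> consx E i (uav_rec E k i)" using uav_cons[OF assms] by blast
  from Suc.prems have "x \<in> fst (tracker_update N M E k w (D, F)) i" using S by simp
  then have "(i \<in> {1..N} \<and> rcv_uav_at_cu E k i w \<and> x = uav_rec E k i) \<or> x \<in> D i \<or>
     (\<exists>w' u. x = (Comp w' k, u) \<and> cu_msg E k w' = NewTraj i u)"
    unfolding tracker_update_def Let_def by (auto split: if_splits)
  moreover have "consx E i (Comp w' k, u)" if "cu_msg E k w' = NewTraj i u" for w' u
    using that unfolding consx_def by simp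
  ultimately show ?case using IH rc by blast
qed

lemma main:
  assumes "valid_exec N M E" "w \<in> {1..M}" "i \<in> {1..N}"
  shows "snd (trackers N M E k w) i \<Longrightarrow> uav_rec E k i \<in> fst (trackers N M E k w) i"
proof (induction k)
  case 0
  then show ?case by simp
next
  case (Suc k)
  obtain D F where S: "trackers N M E k w = (D, F)" by fastforce
  have IH: "F i \<Longrightarrow> uav_rec E k i \<in> D i" using Suc.IH S by simp
  have DC: "\<And>x. x \<in> D i \<Longrightarrow> consx E i x" using D_cons[OF assms(1), of _ k w i] S by simp
  have rc: "consx E i (uav_rec E k i)" using uav_cons[OF assms(1,3)] by blast
  define heard where "heard = (\<lambda>i. i \<in> {1..N} \<and> rcv_uav_at_cu E k i w)"
  define r where "r = (\<lambda>i. uav_rec E k i)"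
  define matches where "matches = (\<lambda>i. {x \<in> D i. fst x = fst (r i)})"
  define D1 where "D1 = (\<lambda>i. if heard i then
                 (if rebroadcast M E k i then {r i}
                  else if matches i \<noteq> {} then matches i else D i)
               else D i)"
  define F1 where "F1 = (\<lambda>i. if heard i then (rebroadcast M E k i \<or> matches i \<noteq> {}) else F i)"
  define multi where "multi = (\<exists>i\<in>{1..N}. \<exists>a\<in>D1 i. \<exists>b\<in>D1 i. a \<noteq> b)"
  define heardC where "heardC = {w'\<in>{1..M}. w' = w \<or> rcv_cu_at_cu E k w' w}"
  define F2 where "F2 = (if multi \<or> card heardC < M then (\<lambda>i. False) else F1)"
  define D2 where "D2 = (\<lambda>i. D1 i \<union> {(Comp w' k, u) | w' u. w' \<in> heardC \<and> cu_msg E k w' = NewTraj i u})"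
  have TU: "trackers N M E (Suc k) w = (D2, F2)"
    using S unfolding D2_def F2_def heardC_def multi_def F1_def D1_def matches_def r_def heard_def
    by (simp add: tracker_update_def Let_def)
  have F2i: "F2 i" using Suc.prems TU by simp
  then have nc: "\<not> card heardC < M" and F1i: "F1 i" unfolding F2_def by (auto split: if_splits)
  have hsub: "heardC \<subseteq> {1..M}" unfolding heardC_def by auto
  have hC: "heardC = {1..M}"
  proof (rule card_subset_eq[OF _ hsub])
    show "finite {1..M}" by simp
    show "card heardC = card {1..M}" using nc card_mono[OF _ hsub] by simp
  qed
  have inD1: "uav_rec E k i \<in> D1 i"
  proof (cases "heard i")
    case True
    show ?thesis
    proof (cases "rebroadcast M E k i")
      case True
      then show ?thesis using \<open>heard i\<close> unfolding D1_def r_def by simp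
    next
      case False
      then have m: "matches i \<noteq> {}" using F1i \<open>heard i\<close> unfolding F1_def by simp
      then obtain x where x: "x \<in> D i" "fst x = fst (uav_rec E k i)"
        unfolding matches_def r_def by auto
      have "x = uav_rec E k i" using cons_unique[OF DC[OF x(1)] rc x(2)] .
      then have "uav_rec E k i \<in> matches i" using x unfolding matches_def r_def by simp
      then show ?thesis using False m \<open>heard i\<close> unfolding D1_def by simp
    qed
  next
    case False
    then have "F i" using F1i unfolding F1_def by simp
    then show ?thesis using IH False unfolding D1_def by simp
  qed
  from uav_step[OF assms(1,3), of k] have "uav_rec E (Suc k) i \<in> D2 i"
  proof
    assume "uav_rec E (Suc k) i = uav_rec E k i"
    then show ?thesis using inD1 unfolding D2_def by simp
  next
    assume "\<exists>w u. w \<in> {1..M} \<and> cu_msg E k w = NewTraj i u \<and> rcv_cu_at_uav E k w i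
       \<and> uav_rec E (Suc k) i = (Comp w k, u)"
    then show ?thesis unfolding D2_def hC by auto
  qed
  then show ?case using TU by simp
qed

theorem lemma1:
  fixes N M :: nat and E :: "'tr exec" and w i k :: nat
  assumes "1 < M" and "M < N"
    and "valid_exec N M E"
    and "w \<in> {1..M}" and "i \<in> {1..N}"
    and "snd (trackers N M E k w) i"
  shows "uav_rec E k i \<in> fst (trackers N M E k w) i"
  using main[OF assms(3,4,5) assms(6)] .

end
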